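(* Let $p$ be an odd prime and $n,k\geq 1$. The reduction map $\Phi:T(n,k)\to S(n,k)$, $\xi_i\mapsto t_i$, induces a homomorphism of May spectral sequences $\Phi:E_r^{*,*,*}T(n,k)\to E_r^{*,*,*}S(n,k)$ which on $E_1$-terms sends $h'_{i,j}$ to $h_{i,j}$ and $b'_{i,j}$ to $b_{i,j}$ (second index read modulo $n$). It sends infinite cocycles of $E_r^{*,*,*}T(n,k)$ to infinite cocycles of $E_r^{*,*,*}S(n,k)$.
   Context: $S(n,k)=\mathbb{Z}/p[t_k,t_{k+1},\dots]/(t_s^{p^n}-t_s)$ is the Hopf algebra with coproduct $\Delta(t_s)=1\otimes t_s+\sum_{k\leq i\leq s-k}t_i\otimes t_{s-i}^{p^i}+t_s\otimes 1$ for $s\leq n+k-1$, and this minus $b_{s-n,n-1}$ for $s\ge n+k$, where $b_{i,j}=\sum_{0<m<p}\binom{p}{m}/p\cdot t_i^{mp^j}\otimes t_i^{(p-m)p^j}$. Its May filtration: $M(t_s^{p^j})=2s-1$ for $k\leq s\leq n+k-1$, $M(t_s^{p^j})=\max\{2s-1,pM(t_{s-n}^{p^{j+n-1}})+1\}$ for $s\geq n+k$, extended to monomials by $M(t_s^{\sum j_ip^i})=\sum j_iM(t_s^{p^i})$ ($0\le j_i<p$), additively over distinct $t_s$, and to cobar elements by $M([\alpha_1|\cdots|\alpha_s])=\sum M(\alpha_i)$; this gives the May spectral sequence $E_r^{s,t,M}S(n,k)$ with $E_1=E[h_{i,j}]\otimes P[b_{i,j}]$ ($i\geq k$, $j\in\mathbb{Z}/n$),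 $h_{i,j}$ the class of $[t_i^{p^j}]$, $b_{i,j}$ the class of $b_{i,j}$. $T(n,k)=P[\xi_i\mid k\leq i\leq n+k-1]$ is the Hopf algebra with $|\xi_i|=2(p-1)(1+p+\cdots+p^{i-1})$ and $\Delta(\xi_i)=\xi_i\otimes 1+\sum_{k\leq r\leq i-k}\xi_r\otimes\xi_{i-r}^{p^r}+1\otimes \xi_i$. Its May filtration is $M(\xi_i^{p^j})=2i-1$, extended to monomials and cobar elements in the same way; the associated (May) spectral sequence $E_r^{s,t,M}T(n,k)$ has $E_1=E[h'_{i,j}\mid k\leq i\leq n+k-1,\ j\geq 0]\otimes P[b'_{i,j}\mid k\leq i\leq n+k-1,\ j\geq 0]$, with $h'_{i,j}$ the class of $[\xi_i^{p^j}]$ and $b'_{i,j}$ the class of $\sum_{0<m<p}\binom{p}{m}/p\ \xi_i^{mp^j}\otimes\xi_i^{(p-m)p^j}$. An infinite cocycle is an element of some $E_r$ on which all higher differentials $d_{r'}$, $r'\geq r$, vanish. *)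

theory Defs
  imports "HOL-Library.Poly_Mapping" "Berlekamp_Zassenhaus.Finite_Field"
begin

text \<open>An element of the s-fold tensor power of a (quotient of a)
polynomial algebra in generators t_i is modelled as a polynomial in variables (a,i),
meaning t_i placed in tensor slot a (a < s). A monomial of type mono thus is a
tensor of monomials; the empty slot stands for the unit 1.\<close>

type_synonym mono = "(nat \<times> nat) \<Rightarrow>\<^sub>0 nat"
type_synonym 'a coch = "mono \<Rightarrow>\<^sub>0 'a"

definition var :: "nat \<times> nat \<Rightarrow> 'a::comm_ring_1 coch" where
  "var v = Poly_Mapping.single (Poly_Mapping.single v 1) 1"

definition const :: "'a::comm_ring_1 \<Rightarrow> 'a coch" where
  "const c = Poly_Mapping.single 0 c"

definition subst :: "(nat \<times> nat \<Rightarrow> 'a::comm_ring_1 coch) \<Rightarrow> 'a coch \<Rightarrow> 'a coch" where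
  "subst \<sigma> x = (\<Sum>m\<in>Poly_Mapping.keys x. const (Poly_Mapping.lookup x m) * (\<Prod>v\<in>Poly_Mapping.keys m. \<sigma> v ^ Poly_Mapping.lookup m v))"

text \<open>Insert the coproduct D a i of t_i into slots a, a+1, shifting later slots.\<close>
definition delta_at :: "(nat \<Rightarrow> nat \<Rightarrow> 'a::comm_ring_1 coch) \<Rightarrow> nat \<Rightarrow> 'a coch \<Rightarrow> 'a coch" where
  "delta_at D a = subst (\<lambda>(b,i). if b < a then var (b,i) else if b = a then D a i else var (Suc b, i))"

text \<open>[1|x]: shift every slot by one.\<close>
definition shift1 :: "'a::comm_ring_1 coch \<Rightarrow> 'a coch" where
  "shift1 = subst (\<lambda>(b,i). var (Suc b, i))"

text \<open>Cobar differential on s-cochains (R is the normal-form map of the quotient):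
 d[x1|...|xs] = [1|x1|...|xs] + sum_a (-1)^(a+1) [...|Delta x_a|...] + (-1)^(s+1) [x1|...|xs|1].\<close>
definition cobar_d :: "('a::comm_ring_1 coch \<Rightarrow> 'a coch) \<Rightarrow> (nat \<Rightarrow> nat \<Rightarrow> 'a coch)
    \<Rightarrow> nat \<Rightarrow> 'a coch \<Rightarrow> 'a coch" where
  "cobar_d R D s x = R (shift1 x) + (\<Sum>a<s. (-1) ^ (a+1) * R (delta_at D a x)) + (-1) ^ (s+1) * x"

text \<open>Coproduct of t_i (resp. xi_i) in slots a, a+1 (1 (x) t_s is var (a+1,s)).\<close>
definition DeltaT :: "nat \<Rightarrow> nat \<Rightarrow> nat \<Rightarrow> nat \<Rightarrow> 'a::comm_ring_1 coch" where
  "DeltaT p k a s = var (Suc a, s) + (\<Sum>i\<in>{k..s-k}. var (a,i) * var (Suc a, s-i) ^ (p ^ i)) + var (a, s)"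

definition bpoly :: "nat \<Rightarrow> nat \<Rightarrow> nat \<Rightarrow> nat \<Rightarrow> 'a::comm_ring_1 coch" where
  "bpoly p a i j = (\<Sum>m\<in>{1..<p}. const (of_nat ((p choose m) div p))
      * var (a,i) ^ (m * p ^ j) * var (Suc a, i) ^ ((p - m) * p ^ j))"

definition DeltaS :: "nat \<Rightarrow> nat \<Rightarrow> nat \<Rightarrow> nat \<Rightarrow> nat \<Rightarrow> 'a::comm_ring_1 coch" where
  "DeltaS p n k a s = DeltaT p k a s - (if n + k \<le> s then bpoly p a (s - n) (n - 1) else 0)"

text \<open>Normal form in S(n,k): t^(q) = t with q = p^n, exponents reduced into {0..q-1}.\<close>
definition redexp :: "nat \<Rightarrow> nat \<Rightarrow> nat" where
  "redexp q e = (if e < q then e else (e - 1) mod (q - 1) + 1)"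

definition red :: "nat \<Rightarrow> 'a::comm_ring_1 coch \<Rightarrow> 'a coch" where
  "red q x = (\<Sum>m\<in>Poly_Mapping.keys x. Poly_Mapping.single (Poly_Mapping.map (redexp q) m) (Poly_Mapping.lookup x m))"

text \<open>Cobar complexes (normalized: every slot has positive degree).\<close>
definition CT :: "nat \<Rightarrow> nat \<Rightarrow> nat \<Rightarrow> 'a::comm_ring_1 coch set" where
  "CT n k s = {x. \<forall>m\<in>Poly_Mapping.keys x. (\<forall>(a,i)\<in>Poly_Mapping.keys m. a < s \<and> k \<le> i \<and> i < n + k)
                               \<and> (\<forall>a<s. \<exists>i. (a,i) \<in> Poly_Mapping.keys m)}"

definition CS :: "nat \<Rightarrow> nat \<Rightarrow> nat \<Rightarrow> nat \<Rightarrow> 'a::comm_ring_1 coch set" where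
  "CS p n k s = {x. \<forall>m\<in>Poly_Mapping.keys x. (\<forall>(a,i)\<in>Poly_Mapping.keys m. a < s \<and> k \<le> i \<and> Poly_Mapping.lookup m (a,i) < p ^ n)
                               \<and> (\<forall>a<s. \<exists>i. (a,i) \<in> Poly_Mapping.keys m)}"

definition dT :: "nat \<Rightarrow> nat \<Rightarrow> nat \<Rightarrow> 'a::comm_ring_1 coch \<Rightarrow> 'a coch" where
  "dT p k = cobar_d id (DeltaT p k)"

definition dS :: "nat \<Rightarrow> nat \<Rightarrow> nat \<Rightarrow> nat \<Rightarrow> 'a::comm_ring_1 coch \<Rightarrow> 'a coch" where
  "dS p n k = cobar_d (red (p ^ n)) (DeltaS p n k)"

definition digit :: "nat \<Rightarrow> nat \<Rightarrow> nat \<Rightarrow> nat" where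
  "digit p e j = (e div p ^ j) mod p"

definition MT :: "nat \<Rightarrow> mono \<Rightarrow> nat" where
  "MT p m = (\<Sum>(a,i)\<in>Poly_Mapping.keys m. (2 * i - 1) * (\<Sum>j\<le>Poly_Mapping.lookup m (a,i). digit p (Poly_Mapping.lookup m (a,i)) j))"

text \<open>Mval p n k s j = M(t_s^(p^j)) in S(n,k), for j < n.\<close>
function Mval :: "nat \<Rightarrow> nat \<Rightarrow> nat \<Rightarrow> nat \<Rightarrow> nat \<Rightarrow> nat" where
  "Mval p n k s j = (if n = 0 \<or> s < n + k then 2 * s - 1
      else max (2 * s - 1) (p * Mval p n k (s - n) ((j + n - 1) mod n) + 1))"
  by pat_completeness auto
termination by (relation "measure (\<lambda>(p,n,k,s,j). s)") auto

definition MS :: "nat \<Rightarrow> nat \<Rightarrow> nat \<Rightarrow> mono \<Rightarrow> nat" where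
  "MS p n k m = (\<Sum>(a,i)\<in>Poly_Mapping.keys m. \<Sum>j<n. digit p (Poly_Mapping.lookup m (a,i)) j * Mval p n k i j)"

text \<open>Spectral sequence of the increasing filtration F_w = span of basis tensors of
May filtration at most w. Z_r = {x in F_w : dx in F_(w-r)},
B_r = Z_(r-1)^(w-1) + d Z_(r-1)^(w+r-1), E_r = Z_r / B_r (r \<ge> 1), d_r : E_r^w \<rightarrow> E_r^(w-r).\<close>
definition filt :: "(nat \<Rightarrow> 'a::comm_ring_1 coch set) \<Rightarrow> (mono \<Rightarrow> nat) \<Rightarrow> nat \<Rightarrow> int \<Rightarrow> 'a coch set" where
  "filt C M s w = {x \<in> C s. \<forall>m\<in>Poly_Mapping.keys x. int (M m) \<le> w}"

definition ZZ :: "(nat \<Rightarrow> 'a::comm_ring_1 coch set) \<Rightarrow> (mono \<Rightarrow> nat) \<Rightarrow> (nat \<Rightarrow> 'a coch \<Rightarrow> 'a coch)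
    \<Rightarrow> nat \<Rightarrow> nat \<Rightarrow> int \<Rightarrow> 'a coch set" where
  "ZZ C M d r s w = {x \<in> filt C M s w. d s x \<in> filt C M (Suc s) (w - int r)}"

definition BB :: "(nat \<Rightarrow> 'a::comm_ring_1 coch set) \<Rightarrow> (mono \<Rightarrow> nat) \<Rightarrow> (nat \<Rightarrow> 'a coch \<Rightarrow> 'a coch)
    \<Rightarrow> nat \<Rightarrow> nat \<Rightarrow> int \<Rightarrow> 'a coch set" where
  "BB C M d r s w = {y + z | y z. y \<in> ZZ C M d (r - 1) s (w - 1) \<and>
      (z = 0 \<or> (\<exists>s' u. s = Suc s' \<and> u \<in> ZZ C M d (r - 1) s' (w + int r - 1) \<and> z = d s' u))}"

text \<open>x \<in> Z_r represents an infinite cocycle of E_r: its class survives to every E_r', r' \<ge> r,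
 i.e. all d_r' (r' \<ge> r) vanish on it.\<close>
definition inf_cocycle :: "(nat \<Rightarrow> 'a::comm_ring_1 coch set) \<Rightarrow> (mono \<Rightarrow> nat) \<Rightarrow> (nat \<Rightarrow> 'a coch \<Rightarrow> 'a coch)
    \<Rightarrow> nat \<Rightarrow> nat \<Rightarrow> int \<Rightarrow> 'a coch \<Rightarrow> bool" where
  "inf_cocycle C M d r s w x \<longleftrightarrow> x \<in> ZZ C M d r s w \<and>
      (\<forall>r'\<ge>r. \<exists>z\<in>ZZ C M d r' s w. x - z \<in> BB C M d r s w)"

text \<open>Representing 1-cochains of h_{i,j} = [t_i^(p^j)] and b_{i,j}.\<close>
definition hcoch :: "nat \<Rightarrow> nat \<Rightarrow> nat \<Rightarrow> 'a::comm_ring_1 coch" where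
  "hcoch p i j = var (0,i) ^ (p ^ j)"

definition bcoch :: "nat \<Rightarrow> nat \<Rightarrow> nat \<Rightarrow> 'a::comm_ring_1 coch" where
  "bcoch p i j = bpoly p 0 i j"

end

theory Submission imports Defs "Berlekamp_Zassenhaus.Berlekamp_Type_Based" "HOL-Computational_Algebra.Primes"
begin

definition Lext :: "('k \<Rightarrow> 'a::zero \<Rightarrow> 'b::ab_group_add) \<Rightarrow> ('k \<Rightarrow>\<^sub>0 'a) \<Rightarrow> 'b" where
  "Lext F x = (\<Sum>m\<in>Poly_Mapping.keys x. F m (Poly_Mapping.lookup x m))"

definition additive :: "('k \<Rightarrow> 'a::monoid_add \<Rightarrow> 'b::ab_group_add) \<Rightarrow> bool" where
  "additive F \<longleftrightarrow> (\<forall>m a b. F m (a + b) = F m a + F m b)"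

lemma additive_zero: "additive F \<Longrightarrow> F m 0 = 0"
proof -
  assume "additive F"
  then have "F m (0+0) = F m 0 + F m 0" unfolding additive_def by blast
  then show ?thesis by simp
qed

lemma Lext_superset:
  assumes "finite S" "Poly_Mapping.keys x \<subseteq> S" "\<And>m. F m 0 = 0"
  shows "Lext F x = (\<Sum>m\<in>S. F m (Poly_Mapping.lookup x m))"
  unfolding Lext_def
  by (rule sum.mono_neutral_left) (auto simp: in_keys_iff assms)

lemma Lext_add:
  assumes "additive F"
  shows "Lext F (x + y) = Lext F x + Lext F y"
proof -
  let ?S = "Poly_Mapping.keys x \<union> Poly_Mapping.keys y"
  have z: "\<And>m. F m 0 = 0" using additive_zero[OF assms] .
  have "Lext F (x + y) = (\<Sum>m\<in>?S. F m (Poly_Mapping.lookup (x+y) m))"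
    using keys_add[of x y] z by (intro Lext_superset) auto
  also have "\<dots> = (\<Sum>m\<in>?S. F m (Poly_Mapping.lookup x m) + F m (Poly_Mapping.lookup y m))"
    using assms by (simp add: lookup_add additive_def)
  also have "\<dots> = Lext F x + Lext F y"
    by (simp add: sum.distrib Lext_superset[where S="?S"] z)
  finally show ?thesis .
qed

lemma Lext_zero: "Lext F 0 = 0" by (simp add: Lext_def)

lemma Lext_single: "F m 0 = 0 \<Longrightarrow> Lext F (Poly_Mapping.single m c) = F m c"
  by (simp add: Lext_def)

lemma Lext_sum: "additive F \<Longrightarrow> Lext F (sum g A) = (\<Sum>a\<in>A. Lext F (g a))"
  by (induct A rule: infinite_finite_induct) (auto simp: Lext_zero Lext_add)

lemma Lext_uminus:
  fixes F :: "'k \<Rightarrow> 'a::ab_group_add \<Rightarrow> 'b::ab_group_add"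
  shows "additive F \<Longrightarrow> Lext F (- x) = - Lext F x"
  using Lext_add[of F x "-x"] by (simp add: Lext_zero) (metis add.commute eq_neg_iff_add_eq_0)

lemma Lext_diff:
  fixes F :: "'k \<Rightarrow> 'a::ab_group_add \<Rightarrow> 'b::ab_group_add"
  shows "additive F \<Longrightarrow> Lext F (x - y) = Lext F x - Lext F y"
  using Lext_add[of F x "-y"] Lext_uminus[of F y] by simp

lemma pm_expand: "x = (\<Sum>m\<in>Poly_Mapping.keys x. Poly_Mapping.single m (Poly_Mapping.lookup x m))"
proof (rule poly_mapping_eqI)
  fix k
  show "Poly_Mapping.lookup x k = Poly_Mapping.lookup (\<Sum>m\<in>Poly_Mapping.keys x. Poly_Mapping.single m (Poly_Mapping.lookup x m)) k"
    by (cases "k \<in> Poly_Mapping.keys x") (auto simp: lookup_sum lookup_single when_def in_keys_iff)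
qed

lemma Lext_expand: "additive F \<Longrightarrow> Lext F x = (\<Sum>m\<in>Poly_Mapping.keys x. F m (Poly_Mapping.lookup x m))"
  by (simp add: Lext_def)

definition fmon :: "(nat \<times> nat \<Rightarrow> 'a::comm_ring_1 coch) \<Rightarrow> mono \<Rightarrow> 'a coch" where
  "fmon \<sigma> m = (\<Prod>v\<in>Poly_Mapping.keys m. \<sigma> v ^ Poly_Mapping.lookup m v)"

lemma subst_Lext: "subst \<sigma> = Lext (\<lambda>m c. const c * fmon \<sigma> m)"
  by (simp add: fun_eq_iff subst_def Lext_def fmon_def)

lemma const_add: "const (a + b) = const a + const b"
  by (simp add: const_def single_add)

lemma const_mult: "const (a * b) = const a * const b"
  by (simp add: const_def mult_single)

lemma additive_subst: "additive (\<lambda>m c. const c * fmon \<sigma> m)"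
  by (simp add: additive_def const_add distrib_right)

lemma red_Lext: "red q = Lext (\<lambda>m c. Poly_Mapping.single (Poly_Mapping.map (redexp q) m) c)"
  by (simp add: fun_eq_iff red_def Lext_def)

lemma additive_red: "additive (\<lambda>m c. Poly_Mapping.single (Poly_Mapping.map (redexp q) m) c)"
  by (simp add: additive_def single_add)

lemma red_add: "red q (x + y) = red q x + red q y"
  by (simp add: red_Lext Lext_add additive_red)
lemma red_diff: "red q (x - y) = red q x - red q y"
  by (simp add: red_Lext Lext_diff additive_red)
lemma red_uminus: "red q (- y) = - red q y"
  by (simp add: red_Lext Lext_uminus additive_red)
lemma red_zero: "red q 0 = 0"
  by (simp add: red_Lext Lext_zero)
lemma red_sum: "red q (sum g A) = (\<Sum>a\<in>A. red q (g a))"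
  by (simp add: red_Lext Lext_sum additive_red)
lemma red_single: "red q (Poly_Mapping.single m c) = Poly_Mapping.single (Poly_Mapping.map (redexp q) m) c"
  by (simp add: red_Lext Lext_single)

lemma red_sign: "red q ((-1) ^ k * y) = (-1) ^ k * red q y"
  by (cases "even k") (auto simp: red_uminus)

lemma const_zero[simp]: "const 0 = 0" by (simp add: const_def)

lemma subst_sum_single:
  "subst \<sigma> (\<Sum>m\<in>A. Poly_Mapping.single (h m) (c m)) = (\<Sum>m\<in>A. const (c m) * fmon \<sigma> (h m))"
  by (simp add: subst_Lext Lext_sum additive_subst Lext_single)

lemma lookup_map0: "f 0 = 0 \<Longrightarrow> Poly_Mapping.lookup (Poly_Mapping.map f m) k = f (Poly_Mapping.lookup m k)"
  by (simp add: Poly_Mapping.map.rep_eq when_def)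

lemma redexp_0[simp]: "0 < q \<Longrightarrow> redexp q 0 = 0" by (simp add: redexp_def)

lemma redexp_alt: "2 \<le> q \<Longrightarrow> redexp q e = (if e = 0 then 0 else (e-1) mod (q-1) + 1)"
  by (auto simp: redexp_def)

lemma keys_map_red: "2 \<le> q \<Longrightarrow> Poly_Mapping.keys (Poly_Mapping.map (redexp q) m) = Poly_Mapping.keys m"
  by (auto simp: in_keys_iff lookup_map0 redexp_alt split: if_splits)

lemma redexp_small: "e < q \<Longrightarrow> redexp q e = e"
  by (simp add: redexp_def)

lemma redexp_lt: "2 \<le> q \<Longrightarrow> redexp q e < q"
proof -
  assume q: "2 \<le> q"
  have "(e - 1) mod (q - 1) < q - 1" using q by simp
  then have "(e - 1) mod (q - 1) + 1 < q" using q by linarith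
  then show ?thesis using q by (auto simp: redexp_def)
qed

lemma redexp_pos: "2 \<le> q \<Longrightarrow> e \<noteq> 0 \<Longrightarrow> redexp q e \<noteq> 0"
  by (simp add: redexp_alt)

lemma redexp_add: assumes q: "2 \<le> q" shows "redexp q (a + b) = redexp q (redexp q a + b)"
proof (cases "a = 0")
  case True then show ?thesis using q by simp
next
  case False
  have "(a + b - 1) mod (q - 1) = ((a - 1) + b) mod (q - 1)" using False by (simp add: algebra_simps)
  also have "\<dots> = ((a - 1) mod (q - 1) + b) mod (q - 1)" by (simp add: mod_add_left_eq)
  finally show ?thesis using False q by (simp add: redexp_alt)
qed

lemma redexp_mult_q: assumes q: "2 \<le> q" shows "redexp q (q * e) = redexp q e"
proof (cases "e = 0")
  case True then show ?thesis by simp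
next
  case False
  obtain r where r: "q = Suc r" using q by (cases q) auto
  obtain e' where e': "e = Suc e'" using False by (cases e) auto
  have "q * e - 1 = (e - 1) + (q - 1) * e" unfolding r e' by simp
  then have "(q * e - 1) mod (q - 1) = (e - 1) mod (q - 1)" by simp
  then show ?thesis using False q by (simp add: redexp_alt)
qed

lemma redexp_sub_q: assumes q: "2 \<le> q" "q \<le> e" shows "redexp q e = redexp q (e - q + 1)"
proof -
  have "e - 1 = (e - q) + (q - 1)" using q by simp
  then have "(e - 1) mod (q - 1) = (e - q) mod (q - 1)" by simp
  then show ?thesis using q by (simp add: redexp_alt)
qed

lemma map_red_add: "2 \<le> q \<Longrightarrow>
  Poly_Mapping.map (redexp q) (m1 + m2) = Poly_Mapping.map (redexp q) (Poly_Mapping.map (redexp q) m1 + m2)"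
proof -
  assume q: "2 \<le> q"
  show ?thesis
  proof (rule poly_mapping_eqI)
    fix k
    show "Poly_Mapping.lookup (Poly_Mapping.map (redexp q) (m1 + m2)) k =
      Poly_Mapping.lookup (Poly_Mapping.map (redexp q) (Poly_Mapping.map (redexp q) m1 + m2)) k"
      using q redexp_add[OF q, of "Poly_Mapping.lookup m1 k" "Poly_Mapping.lookup m2 k"]
      by (simp add: lookup_map0 lookup_add)
  qed
qed

lemma mult_expand: "Poly_Mapping.single m c * y =
   (\<Sum>m'\<in>Poly_Mapping.keys y. Poly_Mapping.single (m + m') (c * Poly_Mapping.lookup y m'))"
proof -
  have "Poly_Mapping.single m c * y = Poly_Mapping.single m c * (\<Sum>m'\<in>Poly_Mapping.keys y. Poly_Mapping.single m' (Poly_Mapping.lookup y m'))"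
    by (rule arg_cong[OF pm_expand])
  also have "\<dots> = (\<Sum>m'\<in>Poly_Mapping.keys y. Poly_Mapping.single (m + m') (c * Poly_Mapping.lookup y m'))"
    by (simp add: sum_distrib_left mult_single)
  finally show ?thesis .
qed

lemma red_mult_single: "2 \<le> q \<Longrightarrow>
  red q (Poly_Mapping.single m c * y) = red q (Poly_Mapping.single (Poly_Mapping.map (redexp q) m) c * y)"
  by (simp only: mult_expand red_sum red_single map_red_add[symmetric])

lemma red_mult_left: assumes q: "2 \<le> q" shows "red q (x * y) = red q (red q x * y)"
proof -
  have "x * y = (\<Sum>m\<in>Poly_Mapping.keys x. Poly_Mapping.single m (Poly_Mapping.lookup x m) * y)"
  proof -
    have "x * y = (\<Sum>m\<in>Poly_Mapping.keys x. Poly_Mapping.single m (Poly_Mapping.lookup x m)) * y"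
      by (rule arg_cong[OF pm_expand])
    also have "\<dots> = (\<Sum>m\<in>Poly_Mapping.keys x. Poly_Mapping.single m (Poly_Mapping.lookup x m) * y)"
      by (simp add: sum_distrib_right)
    finally show ?thesis .
  qed
  moreover have "red q x * y = (\<Sum>m\<in>Poly_Mapping.keys x. Poly_Mapping.single (Poly_Mapping.map (redexp q) m) (Poly_Mapping.lookup x m) * y)"
    by (simp add: red_def sum_distrib_right)
  ultimately show ?thesis
    by (simp only: red_sum) (rule sum.cong[OF refl red_mult_single[OF q]])
qed

lemma red_mult_right: "2 \<le> q \<Longrightarrow> red q (x * y) = red q (x * red q y)"
  by (metis mult.commute red_mult_left)

lemma red_prod: assumes q: "2 \<le> q"
  shows "red q (\<Prod>v\<in>S. a v) = red q (\<Prod>v\<in>S. red q (a v))"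
proof (induct S rule: infinite_finite_induct)
  case (insert v S)
  have "red q (\<Prod>v\<in>insert v S. a v) = red q (a v * (\<Prod>v\<in>S. a v))" using insert by simp
  also have "\<dots> = red q (red q (a v) * red q (\<Prod>v\<in>S. a v))"
    using red_mult_left[OF q] red_mult_right[OF q] by metis
  also have "\<dots> = red q (red q (a v) * red q (\<Prod>v\<in>S. red q (a v)))" using insert by simp
  also have "\<dots> = red q (red q (a v) * (\<Prod>v\<in>S. red q (a v)))"
    by (rule red_mult_right[OF q, symmetric])
  also have "\<dots> = red q (\<Prod>v\<in>insert v S. red q (a v))"
    using insert by simp
  finally show ?case .
qed simp_all

lemma red_pow_redexp: assumes q: "2 \<le> q" and F: "red q (b ^ q) = red q b"
  shows "red q (b ^ e) = red q (b ^ redexp q e)"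
proof (induct e rule: less_induct)
  case (less e)
  show ?case
  proof (cases "e < q")
    case True then show ?thesis by (simp add: redexp_small)
  next
    case False
    then have e: "e = q + (e - q)" by simp
    have "red q (b ^ e) = red q (b ^ q * b ^ (e - q))" by (subst e) (simp add: power_add)
    also have "\<dots> = red q (red q b * b ^ (e - q))" using red_mult_left[OF q, of "b ^ q"] F by simp
    also have "\<dots> = red q (b ^ (e - q + 1))" using red_mult_left[OF q, of b] by simp
    also have "\<dots> = red q (b ^ redexp q (e - q + 1))" using less[of "e - q + 1"] q False by simp
    also have "redexp q (e - q + 1) = redexp q e" using redexp_sub_q[OF q] False by simp
    finally show ?thesis .
  qed
qed


lemma of_nat_coch_0: "(of_nat k :: 'a::comm_ring_1 coch) = 0 \<longleftrightarrow> (of_nat k :: 'a) = 0"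
proof -
  have e: "(of_nat k :: 'a coch) = Poly_Mapping.single 0 (of_nat k)" by (simp only: of_nat_single o_apply)
  have "Poly_Mapping.single (0::mono) a = 0 \<longleftrightarrow> a = 0" for a :: 'a
  proof
    assume h: "Poly_Mapping.single (0::mono) a = 0"
    have "a = Poly_Mapping.lookup (Poly_Mapping.single (0::mono) a) 0" by simp
    also have "\<dots> = 0" unfolding h by simp
    finally show "a = 0" .
  qed simp
  then show ?thesis by (simp only: e)
qed

lemma CHAR_coch: "CHAR('p::prime_card mod_ring coch) = CARD('p)"
proof (rule CHAR_eqI)
  show "of_nat CARD('p) = (0::'p mod_ring coch)" by (simp only: of_nat_coch_0) simp
  fix x assume "of_nat x = (0::'p mod_ring coch)"
  then have "of_nat x = (0::'p mod_ring)" by (simp only: of_nat_coch_0)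
  then show "CARD('p) dvd x" using of_nat_eq_0_iff_char_dvd[where 'a="'p mod_ring"] by simp
qed

lemma single_pow: "Poly_Mapping.single m c ^ e = Poly_Mapping.single (Poly_Mapping.map (\<lambda>k. e * k) m) (c ^ e)"
proof (induct e)
  case 0
  have "Poly_Mapping.map (\<lambda>k. 0 * k) m = 0" by (rule poly_mapping_eqI) (simp add: lookup_map0)
  then show ?case by simp
next
  case (Suc e)
  have "m + Poly_Mapping.map (\<lambda>k. e * k) m = Poly_Mapping.map (\<lambda>k. Suc e * k) m"
    by (rule poly_mapping_eqI) (simp add: lookup_map0 lookup_add)
  then show ?case using Suc by (simp add: mult_single)
qed

lemma fermat_pow: "(c::'p::prime_card mod_ring) ^ (CARD('p) ^ n) = c"
proof (induct n)
  case (Suc n)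
  have "c ^ (CARD('p) ^ Suc n) = (c ^ (CARD('p) ^ n)) ^ CARD('p)"
  proof -
    have "CARD('p) ^ Suc n = CARD('p) ^ n * CARD('p)" by simp
    then show ?thesis by (simp only: power_mult)
  qed
  then show ?case using Suc by simp
qed simp

lemma card_ge2: "2 \<le> CARD('p::prime_card)"
  using prime_card prime_ge_2_nat by blast

lemma q_ge2: "1 \<le> n \<Longrightarrow> 2 \<le> CARD('p::prime_card) ^ n"
proof -
  assume n: "1 \<le> n"
  then obtain n' where n': "n = Suc n'" by (cases n) auto
  have a: "1 \<le> CARD('p) ^ n'" using card_ge2[where 'p='p] by simp
  have "2 * 1 \<le> CARD('p) * CARD('p) ^ n'" by (rule mult_le_mono[OF card_ge2 a])
  then show ?thesis by (simp add: n')
qed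

lemma red_frob: assumes n: "1 \<le> n"
  shows "red (CARD('p::prime_card) ^ n) ((b :: 'p mod_ring coch) ^ (CARD('p) ^ n)) = red (CARD('p) ^ n) b"
proof -
  let ?q = "CARD('p) ^ n"
  have q: "2 \<le> ?q" using q_ge2[OF n] .
  have pr: "prime CHAR('p mod_ring coch)" by (simp add: CHAR_coch prime_card)
  have "b ^ ?q = (\<Sum>m\<in>Poly_Mapping.keys b. Poly_Mapping.single m (Poly_Mapping.lookup b m)) ^ ?q"
    by (rule arg_cong[OF pm_expand])
  also have "\<dots> = (\<Sum>m\<in>Poly_Mapping.keys b. Poly_Mapping.single m (Poly_Mapping.lookup b m) ^ ?q)"
    by (rule freshmans_dream_sum'[OF pr]) (simp add: CHAR_coch)
  also have "\<dots> = (\<Sum>m\<in>Poly_Mapping.keys b. Poly_Mapping.single (Poly_Mapping.map (\<lambda>k. ?q * k) m) (Poly_Mapping.lookup b m))"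
    by (rule sum.cong) (simp_all only: single_pow fermat_pow)
  finally have e: "b ^ ?q = \<dots>" .
  have mm: "Poly_Mapping.map (redexp ?q) (Poly_Mapping.map (\<lambda>k. ?q * k) m) = Poly_Mapping.map (redexp ?q) m" for m
    by (rule poly_mapping_eqI) (use q in \<open>simp add: lookup_map0 redexp_mult_q\<close>)
  show ?thesis unfolding e red_sum red_single mm by (simp only: red_def)
qed

lemma red_const_mult: "red q (const c * y) = const c * red q y"
proof -
  have "red q (const c * y) = red q (\<Sum>m'\<in>Poly_Mapping.keys y. Poly_Mapping.single (0 + m') (c * Poly_Mapping.lookup y m'))"
    unfolding const_def mult_expand ..
  also have "\<dots> = (\<Sum>m'\<in>Poly_Mapping.keys y. Poly_Mapping.single (Poly_Mapping.map (redexp q) m') (c * Poly_Mapping.lookup y m'))"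
    by (simp add: red_sum red_single)
  also have "\<dots> = const c * red q y"
    by (simp add: red_def const_def sum_distrib_left mult_single)
  finally show ?thesis .
qed

lemma red_fmon:
  fixes \<sigma>1 \<sigma>2 :: "nat \<times> nat \<Rightarrow> 'a::comm_ring_1 coch"
  assumes q: "2 \<le> q" and F: "\<And>b::'a coch. red q (b ^ q) = red q b"
    and agree: "\<And>v. v \<in> Poly_Mapping.keys m \<Longrightarrow> \<sigma>1 v = \<sigma>2 v"
  shows "red q (fmon \<sigma>1 (Poly_Mapping.map (redexp q) m)) = red q (fmon \<sigma>2 m)"
proof -
  have "fmon \<sigma>1 (Poly_Mapping.map (redexp q) m) = (\<Prod>v\<in>Poly_Mapping.keys m. \<sigma>2 v ^ redexp q (Poly_Mapping.lookup m v))"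
    unfolding fmon_def keys_map_red[OF q] using q agree by (intro prod.cong) (simp_all add: lookup_map0)
  then have "red q (fmon \<sigma>1 (Poly_Mapping.map (redexp q) m)) = red q (\<Prod>v\<in>Poly_Mapping.keys m. red q (\<sigma>2 v ^ redexp q (Poly_Mapping.lookup m v)))"
    using red_prod[OF q] by simp
  also have "\<dots> = red q (\<Prod>v\<in>Poly_Mapping.keys m. red q (\<sigma>2 v ^ Poly_Mapping.lookup m v))"
  proof -
    have e: "red q (\<sigma>2 v ^ redexp q (Poly_Mapping.lookup m v)) = red q (\<sigma>2 v ^ Poly_Mapping.lookup m v)" for v
      using red_pow_redexp[OF q F[of "\<sigma>2 v"], of "Poly_Mapping.lookup m v"] by (rule sym)
    show ?thesis by (simp only: e)
  qed
  also have "\<dots> = red q (fmon \<sigma>2 m)"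
    unfolding fmon_def by (rule red_prod[OF q, symmetric])
  finally show ?thesis .
qed

lemma red_subst_red:
  fixes \<sigma>1 \<sigma>2 :: "nat \<times> nat \<Rightarrow> 'a::comm_ring_1 coch"
  assumes q: "2 \<le> q" and F: "\<And>b::'a coch. red q (b ^ q) = red q b"
    and agree: "\<And>m v. m \<in> Poly_Mapping.keys x \<Longrightarrow> v \<in> Poly_Mapping.keys m \<Longrightarrow> \<sigma>1 v = \<sigma>2 v"
  shows "red q (subst \<sigma>1 (red q x)) = red q (subst \<sigma>2 x)"
proof -
  have "red q (subst \<sigma>1 (red q x)) = red q (\<Sum>m\<in>Poly_Mapping.keys x. const (Poly_Mapping.lookup x m) * fmon \<sigma>1 (Poly_Mapping.map (redexp q) m))"
    unfolding red_def[of q x] subst_sum_single ..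
  also have "\<dots> = (\<Sum>m\<in>Poly_Mapping.keys x. const (Poly_Mapping.lookup x m) * red q (fmon \<sigma>1 (Poly_Mapping.map (redexp q) m)))"
    by (simp add: red_sum red_const_mult)
  also have "\<dots> = (\<Sum>m\<in>Poly_Mapping.keys x. const (Poly_Mapping.lookup x m) * red q (fmon \<sigma>2 m))"
    using red_fmon[OF q F agree] by simp
  also have "\<dots> = red q (\<Sum>m\<in>Poly_Mapping.keys x. const (Poly_Mapping.lookup x m) * fmon \<sigma>2 m)"
    by (simp add: red_sum red_const_mult)
  also have "(\<Sum>m\<in>Poly_Mapping.keys x. const (Poly_Mapping.lookup x m) * fmon \<sigma>2 m) = subst \<sigma>2 x"
    by (simp add: subst_def fmon_def)
  finally show ?thesis .
qed

lemma red_dT: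
  fixes x :: "'p::prime_card mod_ring coch"
  assumes n: "1 \<le> n" and x: "x \<in> CT n k s"
  shows "red (CARD('p) ^ n) (dT (CARD('p)) k s x) = dS (CARD('p)) n k s (red (CARD('p) ^ n) x)"
proof -
  let ?p = "CARD('p)"
  let ?q = "CARD('p) ^ n"
  have q: "2 \<le> ?q" using q_ge2[OF n] .
  have F: "\<And>b::'p mod_ring coch. red ?q (b ^ ?q) = red ?q b" using red_frob[OF n] .
  have sh: "red ?q (shift1 (red ?q x)) = red ?q (shift1 x)"
    unfolding shift1_def by (rule red_subst_red[OF q F]) simp
  have dl: "red ?q (delta_at (DeltaS ?p n k) a (red ?q x)) = red ?q (delta_at (DeltaT ?p k) a x)" for a
    unfolding delta_at_def
  proof (rule red_subst_red[OF q F])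
    fix m v assume m: "m \<in> Poly_Mapping.keys x" and v: "v \<in> Poly_Mapping.keys m"
    obtain b i where bi: "v = (b, i)" by (cases v)
    have "i < n + k" using x m v bi unfolding CT_def by auto
    then show "(\<lambda>(b, i). if b < a then var (b, i) else if b = a then DeltaS ?p n k a i else var (Suc b, i)) v =
          (\<lambda>(b, i). if b < a then var (b, i) else if b = a then DeltaT ?p k a i else var (Suc b, i)) v"
      by (simp add: bi DeltaS_def)
  qed
  show ?thesis
    unfolding dT_def dS_def cobar_d_def id_def
    by (simp only: red_add red_sum red_sign sh dl)
qed

lemma lookup_map_red: "2 \<le> q \<Longrightarrow> Poly_Mapping.lookup (Poly_Mapping.map (redexp q) m) k = redexp q (Poly_Mapping.lookup m k)"
  by (simp add: lookup_map0)

lemma keys_red: "m' \<in> Poly_Mapping.keys (red q x) \<Longrightarrow> \<exists>m\<in>Poly_Mapping.keys x. m' = Poly_Mapping.map (redexp q) m"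
proof -
  assume h: "m' \<in> Poly_Mapping.keys (red q x)"
  have "Poly_Mapping.keys (red q x) \<subseteq> (\<Union>m\<in>Poly_Mapping.keys x. Poly_Mapping.keys (Poly_Mapping.single (Poly_Mapping.map (redexp q) m) (Poly_Mapping.lookup x m)))"
    unfolding red_def by (rule keys_sum)
  with h show ?thesis by (auto split: if_splits)
qed

lemma red_CT:
  assumes q: "2 \<le> p ^ n" and x: "x \<in> CT n k s"
  shows "red (p ^ n) x \<in> CS p n k s"
  unfolding CS_def
proof (intro CollectI ballI)
  fix m' assume "m' \<in> Poly_Mapping.keys (red (p ^ n) x)"
  then obtain m where m: "m \<in> Poly_Mapping.keys x" and m': "m' = Poly_Mapping.map (redexp (p ^ n)) m"
    using keys_red by blast
  have km: "Poly_Mapping.keys m' = Poly_Mapping.keys m" unfolding m' using keys_map_red[OF q] .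
  from x m have c: "(\<forall>(a,i)\<in>Poly_Mapping.keys m. a < s \<and> k \<le> i \<and> i < n + k) \<and> (\<forall>a<s. \<exists>i. (a,i) \<in> Poly_Mapping.keys m)"
    unfolding CT_def by blast
  have A: "\<forall>(a,i)\<in>Poly_Mapping.keys m'. a < s \<and> k \<le> i \<and> Poly_Mapping.lookup m' (a,i) < p ^ n"
    using c q unfolding km by (auto simp: m' lookup_map_red[OF q] redexp_lt[OF q])
  have B: "\<forall>a<s. \<exists>i. (a,i) \<in> Poly_Mapping.keys m'" using c unfolding km by blast
  show "(\<forall>(a,i)\<in>Poly_Mapping.keys m'. a < s \<and> k \<le> i \<and> Poly_Mapping.lookup m' (a,i) < p ^ n) \<and>
        (\<forall>a<s. \<exists>i. (a,i) \<in> Poly_Mapping.keys m')" using A B by blast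
qed

function sd :: "nat \<Rightarrow> nat \<Rightarrow> nat" where
  "sd p e = (if p < 2 \<or> e = 0 then 0 else e mod p + sd p (e div p))"
  by pat_completeness auto
termination by (relation "measure (\<lambda>(p,e). e)") auto

declare sd.simps[simp del]

lemma sd_rec: "2 \<le> p \<Longrightarrow> sd p x = x mod p + sd p (x div p)"
  by (cases "x = 0") (simp_all add: sd.simps[of p x] sd.simps[of p 0])

lemma sd_0[simp]: "sd p 0 = 0" by (simp add: sd.simps)

lemma sd_1: "2 \<le> p \<Longrightarrow> sd p 1 = 1"
  using sd_rec[of p 1] by simp

lemma sd_digits: "2 \<le> p \<Longrightarrow> e < p ^ N \<Longrightarrow> (\<Sum>j<N. digit p e j) = sd p e"
proof (induct N arbitrary: e)
  case 0 then show ?case by simp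
next
  case (Suc N)
  have d: "digit p e (Suc j) = digit p (e div p) j" for j
    by (simp add: digit_def div_mult2_eq)
  have "e div p < p ^ N" using Suc.prems
    by (simp add: div_less_iff_less_mult mult.commute)
  then have "(\<Sum>j<N. digit p (e div p) j) = sd p (e div p)" using Suc by blast
  then show ?case
    by (simp add: sum.lessThan_Suc_shift d digit_def div_mult2_eq sd_rec[OF Suc.prems(1), of e] del: sum.lessThan_Suc)
qed

lemma sd_split: "2 \<le> p \<Longrightarrow> r < p ^ N \<Longrightarrow> sd p (r + p ^ N * t) = sd p r + sd p t"
proof (induct N arbitrary: r)
  case 0 then show ?case by simp
next
  case (Suc N)
  have r: "r div p < p ^ N" using Suc.prems
    by (simp add: div_less_iff_less_mult mult.commute)
  have e: "r + p ^ Suc N * t = r + (p ^ N * t) * p" by (simp add: mult_ac)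
  have m: "(r + p ^ Suc N * t) mod p = r mod p"
    unfolding e by (rule mod_mult_self1)
  have dv: "(r + p ^ Suc N * t) div p = r div p + p ^ N * t"
    unfolding e using Suc.prems(1) by (simp add: div_mult_self1)
  show ?case
    using sd_rec[OF Suc.prems(1), of "r + p ^ Suc N * t"] sd_rec[OF Suc.prems(1), of r]
      Suc.hyps[OF Suc.prems(1) r] m dv by simp
qed

lemma sd_add: assumes p: "2 \<le> p" shows "sd p (a + b) \<le> sd p a + sd p b"
proof -
  have "\<forall>a b. a + b = N \<longrightarrow> sd p (a + b) \<le> sd p a + sd p b" for N
  proof (induct N rule: less_induct)
    case (less N)
    show ?case
    proof (intro allI impI)
      fix a b assume ab: "a + b = N"
      show "sd p (a + b) \<le> sd p a + sd p b"
      proof (cases "N = 0")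
        case True then show ?thesis using ab by simp
      next
        case False
        have lt: "(a + b) div p < N" using False ab p by (simp add: div_less_dividend)
        have dsum: "(a + b) div p = a div p + b div p + (a mod p + b mod p) div p"
          by (rule div_add1_eq)
        have le: "a div p + b div p \<le> (a + b) div p" using dsum by simp
        have sa: "sd p a = a mod p + sd p (a div p)" using sd_rec[OF p] .
        have sb: "sd p b = b mod p + sd p (b div p)" using sd_rec[OF p] .
        have sab: "sd p (a + b) = (a + b) mod p + sd p ((a + b) div p)" using sd_rec[OF p] .
        have "a div p + b div p < N" using le lt by linarith
        from less.hyps[OF this, rule_format, of "a div p" "b div p", OF refl]
        have ih1: "sd p (a div p + b div p) \<le> sd p (a div p) + sd p (b div p)" .
        show ?thesis
        proof (cases "a mod p + b mod p < p")
          case True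
          have "(a + b) mod p = (a mod p + b mod p) mod p" by (rule mod_add_eq[symmetric])
          also have "\<dots> = a mod p + b mod p" by (rule mod_less[OF True])
          finally have "(a + b) mod p = a mod p + b mod p" .
          moreover have "(a + b) div p = a div p + b div p" using dsum True by simp
          ultimately show ?thesis using sab sa sb ih1 by simp
        next
          case False
          have lt2: "a mod p + b mod p < p * Suc 1"
          proof -
            have "a mod p < p" "b mod p < p" using p by simp_all
            moreover have "p * Suc 1 = p + p" by simp
            ultimately show ?thesis by linarith
          qed
          have "(a mod p + b mod p) div p = 1"
            by (rule div_nat_eqI) (use False lt2 in auto)
          then have d1: "(a + b) div p = (a div p + b div p) + 1" using dsum by simp
          have "(a + b) mod p = (a mod p + b mod p) mod p" by (rule mod_add_eq[symmetric])
          also have "\<dots> = (a mod p + b mod p - p) mod p" using False by (simp add: le_mod_geq)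
          also have "\<dots> = a mod p + b mod p - p" using lt2 by (intro mod_less) simp
          finally have m1: "(a + b) mod p = a mod p + b mod p - p" .
          have "a div p + b div p + 1 < N" using d1 lt by linarith
          from less.hyps[OF this, rule_format, of "a div p + b div p" 1, OF refl]
          have ih2: "sd p (a div p + b div p + 1) \<le> sd p (a div p + b div p) + sd p 1" .
          have e1: "sd p (a + b) = (a mod p + b mod p - p) + sd p (a div p + b div p + 1)"
            by (simp only: sab d1 m1)
          have e2: "(a mod p + b mod p - p) + p = a mod p + b mod p" using False by simp
          show ?thesis using e1 e2 sa sb ih1 ih2 sd_1[OF p] p by linarith
        qed
      qed
    qed
  qed
  then show ?thesis by blast
qed

lemma pow_ge2: "2 \<le> p \<Longrightarrow> 1 \<le> n \<Longrightarrow> 2 \<le> (p::nat) ^ n"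
proof -
  assume p: "2 \<le> p" and n: "1 \<le> n"
  then obtain n' where n': "n = Suc n'" by (cases n) auto
  have a: "1 \<le> p ^ n'" using p by simp
  have "2 * 1 \<le> p * p ^ n'" by (rule mult_le_mono[OF p a])
  then show ?thesis by (simp add: n')
qed

lemma sd_red: assumes p: "2 \<le> p" and n: "1 \<le> n"
  shows "sd p (redexp (p ^ n) e) \<le> sd p e"
proof (induct e rule: less_induct)
  case (less e)
  let ?q = "p ^ n"
  have q: "2 \<le> ?q" using pow_ge2[OF p n] .
  show ?case
  proof (cases "e < ?q")
    case True then show ?thesis by (simp add: redexp_small)
  next
    case False
    define r where "r = e mod ?q"
    define t where "t = e div ?q"
    have er: "e = r + ?q * t" unfolding r_def t_def by simp
    have "?q div ?q \<le> e div ?q" by (rule div_le_mono) (use False in simp)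
    moreover have "?q div ?q = 1" using p by (intro div_self) simp
    ultimately have t1: "1 \<le> t" unfolding t_def by simp
    have rq: "r < ?q" unfolding r_def by (rule mod_less_divisor) (use q in linarith)
    obtain q' where q': "?q = Suc q'" using q by (cases "?q") auto
    have q'1: "1 \<le> q'" using q q' by simp
    have qt: "?q * t = t + q' * t" unfolding q' by simp
    have "1 * 1 \<le> q' * t" by (rule mult_le_mono[OF q'1 t1])
    then have lt: "r + t < e" using er qt by simp
    have e1: "e - 1 = (r + t - 1) + (?q - 1) * t" using er qt t1 q' by simp
    have "redexp ?q e = redexp ?q (r + t)"
    proof -
      have "(e - 1) mod (?q - 1) = (r + t - 1) mod (?q - 1)" unfolding e1 by simp
      moreover have "e \<noteq> 0" "r + t \<noteq> 0" using t1 lt by auto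
      ultimately show ?thesis using q by (simp add: redexp_alt)
    qed
    then have "sd p (redexp ?q e) \<le> sd p (r + t)" using less[OF lt] by simp
    also have "\<dots> \<le> sd p r + sd p t" by (rule sd_add[OF p])
    also have "\<dots> = sd p e" using sd_split[OF p rq, of t] er by simp
    finally show ?thesis .
  qed
qed

declare Mval.simps[simp del]

lemma Mval_low: "i < n + k \<Longrightarrow> Mval p n k i j = 2 * i - 1"
  by (subst Mval.simps) simp

lemma e_lt_pow: assumes p: "2 \<le> p" shows "e < p ^ Suc e"
proof -
  have "e < 2 ^ e" by (rule less_exp)
  also have "(2::nat) ^ e \<le> p ^ e" by (rule power_mono[OF p]) simp
  also have "p ^ e \<le> p ^ Suc e" using p by simp
  finally show ?thesis .
qed

lemma MS_le:
  assumes p: "2 \<le> p" and n: "1 \<le> n" and ks: "\<And>a i. (a, i) \<in> Poly_Mapping.keys m \<Longrightarrow> i < n + k"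
  shows "MS p n k (Poly_Mapping.map (redexp (p ^ n)) m) \<le> MT p m"
proof -
  let ?q = "p ^ n"
  have q: "2 \<le> ?q" using pow_ge2[OF p n] .
  show ?thesis
    unfolding MS_def MT_def keys_map_red[OF q]
  proof (rule sum_mono)
    fix v assume v: "v \<in> Poly_Mapping.keys m"
    obtain a i where ai: "v = (a, i)" by (cases v)
    let ?e = "Poly_Mapping.lookup m (a, i)"
    have il: "i < n + k" using ks v ai by simp
    have "(\<Sum>j<n. digit p (redexp ?q ?e) j * Mval p n k i j) = (\<Sum>j<n. digit p (redexp ?q ?e) j) * (2 * i - 1)"
      by (simp add: Mval_low[OF il] sum_distrib_right)
    also have "(\<Sum>j<n. digit p (redexp ?q ?e) j) = sd p (redexp ?q ?e)"
      by (rule sd_digits[OF p redexp_lt[OF q]])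
    also have "(\<Sum>j\<le>?e. digit p ?e j) = sd p ?e"
      unfolding lessThan_Suc_atMost[symmetric] by (rule sd_digits[OF p e_lt_pow[OF p]])
    ultimately show "(case v of (a, i) \<Rightarrow> \<Sum>j<n. digit p (Poly_Mapping.lookup (Poly_Mapping.map (redexp ?q) m) (a, i)) j * Mval p n k i j)
        \<le> (case v of (a, i) \<Rightarrow> (2 * i - 1) * (\<Sum>j\<le>Poly_Mapping.lookup m (a, i). digit p (Poly_Mapping.lookup m (a, i)) j))"
      using sd_red[OF p n, of ?e] by (simp add: ai lookup_map_red[OF q] mult.commute)
  qed
qed

lemma red_filt:
  assumes p: "2 \<le> p" and n: "1 \<le> n" and y: "y \<in> filt (CT n k) (MT p) s w"
  shows "red (p ^ n) y \<in> filt (CS p n k) (MS p n k) s w"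
proof -
  have q: "2 \<le> p ^ n" using pow_ge2[OF p n] .
  have yC: "y \<in> CT n k s" and yM: "\<And>m. m \<in> Poly_Mapping.keys y \<Longrightarrow> int (MT p m) \<le> w"
    using y unfolding filt_def by auto
  have "\<forall>m'\<in>Poly_Mapping.keys (red (p ^ n) y). int (MS p n k m') \<le> w"
  proof
    fix m' assume "m' \<in> Poly_Mapping.keys (red (p ^ n) y)"
    then obtain m where m: "m \<in> Poly_Mapping.keys y" and m': "m' = Poly_Mapping.map (redexp (p ^ n)) m"
      using keys_red by blast
    have ks: "\<And>a i. (a, i) \<in> Poly_Mapping.keys m \<Longrightarrow> i < n + k"
      using yC m unfolding CT_def by fastforce
    have "MS p n k m' \<le> MT p m" unfolding m' by (rule MS_le[OF p n ks])
    then show "int (MS p n k m') \<le> w" using yM[OF m] by linarith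
  qed
  then show ?thesis using red_CT[OF q yC] unfolding filt_def by blast
qed

lemma redexp_qpow: "2 \<le> q \<Longrightarrow> redexp q (q ^ t * x) = redexp q x"
proof (induct t)
  case (Suc t)
  have "redexp q (q ^ Suc t * x) = redexp q (q * (q ^ t * x))" by (simp add: mult.assoc)
  also have "\<dots> = redexp q (q ^ t * x)" by (rule redexp_mult_q[OF Suc.prems])
  finally show ?case using Suc by simp
qed simp

lemma redexp_digit:
  assumes p: "2 \<le> p" and n: "1 \<le> n" and c: "c < p"
  shows "redexp (p ^ n) (c * p ^ j) = c * p ^ (j mod n)"
proof -
  have q: "2 \<le> p ^ n" using pow_ge2[OF p n] .
  have "p ^ j = p ^ (j mod n + n * (j div n))" by simp
  also have "\<dots> = p ^ (j mod n) * p ^ (n * (j div n))" by (rule power_add)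
  also have "\<dots> = p ^ (j mod n) * (p ^ n) ^ (j div n)" by (simp only: power_mult)
  also have "\<dots> = (p ^ n) ^ (j div n) * p ^ (j mod n)" by (rule mult.commute)
  finally have "c * p ^ j = (p ^ n) ^ (j div n) * (c * p ^ (j mod n))" by (simp add: mult_ac)
  then have "redexp (p ^ n) (c * p ^ j) = redexp (p ^ n) ((p ^ n) ^ (j div n) * (c * p ^ (j mod n)))"
    by (simp only:)
  also have "\<dots> = redexp (p ^ n) (c * p ^ (j mod n))" by (rule redexp_qpow[OF q])
  also have "\<dots> = c * p ^ (j mod n)"
  proof (rule redexp_small)
    have "c * p ^ (j mod n) < p * p ^ (j mod n)" using c p by simp
    also have "\<dots> = p ^ Suc (j mod n)" by simp
    also have "\<dots> \<le> p ^ n" using p n by (intro power_increasing) (simp_all add: Suc_le_eq)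
    finally show "c * p ^ (j mod n) < p ^ n" .
  qed
  finally show ?thesis .
qed

lemma var_pow: "(var v :: 'a::comm_ring_1 coch) ^ e = Poly_Mapping.single (Poly_Mapping.single v e) 1"
  unfolding var_def single_pow by simp

lemma map_red_single: "2 \<le> q \<Longrightarrow> Poly_Mapping.map (redexp q) (Poly_Mapping.single v e) = Poly_Mapping.single v (redexp q e)"
  by (rule map_single) simp

lemma red_hcoch:
  assumes p: "2 \<le> p" and n: "1 \<le> n"
  shows "red (p ^ n) (hcoch p i j :: 'a::comm_ring_1 coch) = hcoch p i (j mod n)"
proof -
  have q: "2 \<le> p ^ n" using pow_ge2[OF p n] .
  have "redexp (p ^ n) (1 * p ^ j) = 1 * p ^ (j mod n)" by (rule redexp_digit[OF p n]) (use p in simp)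
  then show ?thesis unfolding hcoch_def var_pow red_single map_red_single[OF q] by simp
qed

lemma term_eq: "const c * (var v :: 'a::comm_ring_1 coch) ^ a * var w ^ b =
   Poly_Mapping.single (Poly_Mapping.single v a + Poly_Mapping.single w b) c"
  unfolding var_pow const_def by (simp add: mult_single)

lemma map_red_two: assumes q: "2 \<le> q" and vw: "v \<noteq> w"
  shows "Poly_Mapping.map (redexp q) (Poly_Mapping.single v a + Poly_Mapping.single w b) =
    Poly_Mapping.single v (redexp q a) + Poly_Mapping.single w (redexp q b)"
proof (rule poly_mapping_eqI)
  fix k
  have z: "redexp q 0 = 0" using q by simp
  show "Poly_Mapping.lookup (Poly_Mapping.map (redexp q) (Poly_Mapping.single v a + Poly_Mapping.single w b)) k =
    Poly_Mapping.lookup (Poly_Mapping.single v (redexp q a) + Poly_Mapping.single w (redexp q b)) k"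
    using vw z by (cases "k = v"; cases "k = w") (auto simp: lookup_map_red[OF q] lookup_add lookup_single when_def)
qed

lemma red_bcoch:
  assumes p: "2 \<le> p" and n: "1 \<le> n"
  shows "red (p ^ n) (bcoch p i j :: 'a::comm_ring_1 coch) = bcoch p i (j mod n)"
proof -
  have q: "2 \<le> p ^ n" using pow_ge2[OF p n] .
  have bp: "(bcoch p i j' :: 'a coch) = (\<Sum>m\<in>{1..<p}. Poly_Mapping.single (Poly_Mapping.single (0, i) (m * p ^ j') + Poly_Mapping.single (Suc 0, i) ((p - m) * p ^ j'))
      (of_nat ((p choose m) div p)))" for j'
    unfolding bcoch_def bpoly_def term_eq ..
  have "red (p ^ n) (bcoch p i j :: 'a coch) = (\<Sum>m\<in>{1..<p}. Poly_Mapping.single (Poly_Mapping.single (0, i) (redexp (p ^ n) (m * p ^ j)) + Poly_Mapping.single (Suc 0, i) (redexp (p ^ n) ((p - m) * p ^ j)))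
      (of_nat ((p choose m) div p)))"
    unfolding bp red_sum red_single map_red_two[OF q] by (simp add: map_red_two[OF q])
  also have "\<dots> = bcoch p i (j mod n)"
    unfolding bp
  proof (rule sum.cong[OF refl])
    fix m assume m: "m \<in> {1..<p}"
    have "redexp (p ^ n) (m * p ^ j) = m * p ^ (j mod n)" using m by (intro redexp_digit[OF p n]) simp
    moreover have "redexp (p ^ n) ((p - m) * p ^ j) = (p - m) * p ^ (j mod n)" using m by (intro redexp_digit[OF p n]) simp
    ultimately show "Poly_Mapping.single (Poly_Mapping.single (0, i) (redexp (p ^ n) (m * p ^ j)) + Poly_Mapping.single (Suc 0, i) (redexp (p ^ n) ((p - m) * p ^ j)))
      (of_nat ((p choose m) div p) :: 'a) = Poly_Mapping.single (Poly_Mapping.single (0, i) (m * p ^ (j mod n)) + Poly_Mapping.single (Suc 0, i) ((p - m) * p ^ (j mod n)))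
      (of_nat ((p choose m) div p))" by simp
  qed
  finally show ?thesis .
qed

lemma red_ZZ:
  fixes x :: "'p::prime_card mod_ring coch"
  assumes n: "1 \<le> n" and x: "x \<in> ZZ (CT n k) (MT (CARD('p))) (dT (CARD('p)) k) r s w"
  shows "red (CARD('p) ^ n) x \<in> ZZ (CS (CARD('p)) n k) (MS (CARD('p)) n k) (dS (CARD('p)) n k) r s w"
proof -
  have p: "2 \<le> CARD('p)" by (rule card_ge2)
  have xf: "x \<in> filt (CT n k) (MT (CARD('p))) s w"
    and df: "dT (CARD('p)) k s x \<in> filt (CT n k) (MT (CARD('p))) (Suc s) (w - int r)"
    using x unfolding ZZ_def by auto
  have xC: "x \<in> CT n k s" using xf unfolding filt_def by auto
  have "dS (CARD('p)) n k s (red (CARD('p) ^ n) x) = red (CARD('p) ^ n) (dT (CARD('p)) k s x)"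
    using red_dT[OF n xC] by simp
  then show ?thesis unfolding ZZ_def using red_filt[OF p n xf] red_filt[OF p n df] by simp
qed

lemma red_BB:
  fixes y :: "'p::prime_card mod_ring coch"
  assumes n: "1 \<le> n" and y: "y \<in> BB (CT n k) (MT (CARD('p))) (dT (CARD('p)) k) r s w"
  shows "red (CARD('p) ^ n) y \<in> BB (CS (CARD('p)) n k) (MS (CARD('p)) n k) (dS (CARD('p)) n k) r s w"
proof -
  from y obtain y1 z where yz: "y = y1 + z" and y1: "y1 \<in> ZZ (CT n k) (MT (CARD('p))) (dT (CARD('p)) k) (r - 1) s (w - 1)"
    and z: "z = 0 \<or> (\<exists>s' u. s = Suc s' \<and> u \<in> ZZ (CT n k) (MT (CARD('p))) (dT (CARD('p)) k) (r - 1) s' (w + int r - 1) \<and> z = dT (CARD('p)) k s' u)"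
    unfolding BB_def by blast
  have ry: "red (CARD('p) ^ n) y = red (CARD('p) ^ n) y1 + red (CARD('p) ^ n) z"
    unfolding yz by (rule red_add)
  have ry1: "red (CARD('p) ^ n) y1 \<in> ZZ (CS (CARD('p)) n k) (MS (CARD('p)) n k) (dS (CARD('p)) n k) (r - 1) s (w - 1)"
    by (rule red_ZZ[OF n y1])
  from z show ?thesis
  proof
    assume "z = 0"
    then have "red (CARD('p) ^ n) y = red (CARD('p) ^ n) y1 + 0" using ry by (simp add: red_zero)
    then show ?thesis unfolding BB_def using ry1 by blast
  next
    assume "\<exists>s' u. s = Suc s' \<and> u \<in> ZZ (CT n k) (MT (CARD('p))) (dT (CARD('p)) k) (r - 1) s' (w + int r - 1) \<and> z = dT (CARD('p)) k s' u"
    then obtain s' u where s': "s = Suc s'" and u: "u \<in> ZZ (CT n k) (MT (CARD('p))) (dT (CARD('p)) k) (r - 1) s' (w + int r - 1)"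
      and zu: "z = dT (CARD('p)) k s' u" by blast
    have uC: "u \<in> CT n k s'" using u unfolding ZZ_def filt_def by auto
    have rz: "red (CARD('p) ^ n) z = dS (CARD('p)) n k s' (red (CARD('p) ^ n) u)"
      unfolding zu by (rule red_dT[OF n uC])
    have ru: "red (CARD('p) ^ n) u \<in> ZZ (CS (CARD('p)) n k) (MS (CARD('p)) n k) (dS (CARD('p)) n k) (r - 1) s' (w + int r - 1)"
      by (rule red_ZZ[OF n u])
    show ?thesis unfolding BB_def using ry ry1 rz ru s' by blast
  qed
qed

theorem theorem4p4:
  fixes n k :: nat
  assumes "odd CARD('p::prime_card)" and "n \<ge> 1" and "k \<ge> 1"
  shows
    "(\<forall>s (x :: 'p mod_ring coch). x \<in> CT n k s \<longrightarrow>
        red (CARD('p) ^ n) x \<in> CS (CARD('p)) n k s \<and>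
        red (CARD('p) ^ n) (dT (CARD('p)) k s x) = dS (CARD('p)) n k s (red (CARD('p) ^ n) x))
   \<and> (\<forall>r\<ge>1. \<forall>s w.
        red (CARD('p) ^ n) ` ZZ (CT n k) (MT (CARD('p))) (dT (CARD('p)) k) r s w
          \<subseteq> (ZZ (CS (CARD('p)) n k) (MS (CARD('p)) n k) (dS (CARD('p)) n k) r s w
               :: 'p mod_ring coch set)
      \<and> red (CARD('p) ^ n) ` BB (CT n k) (MT (CARD('p))) (dT (CARD('p)) k) r s w
          \<subseteq> (BB (CS (CARD('p)) n k) (MS (CARD('p)) n k) (dS (CARD('p)) n k) r s w
               :: 'p mod_ring coch set))
   \<and> (\<forall>i j. k \<le> i \<and> i < n + k \<longrightarrow>
        red (CARD('p) ^ n) (hcoch (CARD('p)) i j :: 'p mod_ring coch) = hcoch (CARD('p)) i (j mod n)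
      \<and> red (CARD('p) ^ n) (bcoch (CARD('p)) i j :: 'p mod_ring coch) = bcoch (CARD('p)) i (j mod n))
   \<and> (\<forall>r\<ge>1. \<forall>s w (x :: 'p mod_ring coch).
        inf_cocycle (CT n k) (MT (CARD('p))) (dT (CARD('p)) k) r s w x \<longrightarrow>
        inf_cocycle (CS (CARD('p)) n k) (MS (CARD('p)) n k) (dS (CARD('p)) n k) r s w
          (red (CARD('p) ^ n) x))"
proof -
  have n: "1 \<le> n" using assms(2) by simp
  have p: "2 \<le> CARD('p)" by (rule card_ge2)
  have q: "2 \<le> CARD('p) ^ n" using pow_ge2[OF p n] .
  have A: "\<forall>s (x :: 'p mod_ring coch). x \<in> CT n k s \<longrightarrow>
        red (CARD('p) ^ n) x \<in> CS (CARD('p)) n k s \<and>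
        red (CARD('p) ^ n) (dT (CARD('p)) k s x) = dS (CARD('p)) n k s (red (CARD('p) ^ n) x)"
    using red_CT[OF q] red_dT[OF n] by blast
  have B: "\<forall>r\<ge>1. \<forall>s w.
        red (CARD('p) ^ n) ` ZZ (CT n k) (MT (CARD('p))) (dT (CARD('p)) k) r s w
          \<subseteq> (ZZ (CS (CARD('p)) n k) (MS (CARD('p)) n k) (dS (CARD('p)) n k) r s w
               :: 'p mod_ring coch set)
      \<and> red (CARD('p) ^ n) ` BB (CT n k) (MT (CARD('p))) (dT (CARD('p)) k) r s w
          \<subseteq> (BB (CS (CARD('p)) n k) (MS (CARD('p)) n k) (dS (CARD('p)) n k) r s w
               :: 'p mod_ring coch set)"
    using red_ZZ[OF n] red_BB[OF n] by blast
  have C: "\<forall>i j. k \<le> i \<and> i < n + k \<longrightarrow>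
        red (CARD('p) ^ n) (hcoch (CARD('p)) i j :: 'p mod_ring coch) = hcoch (CARD('p)) i (j mod n)
      \<and> red (CARD('p) ^ n) (bcoch (CARD('p)) i j :: 'p mod_ring coch) = bcoch (CARD('p)) i (j mod n)"
    using red_hcoch[OF p n] red_bcoch[OF p n] by blast
  have D: "\<forall>r\<ge>1. \<forall>s w (x :: 'p mod_ring coch).
        inf_cocycle (CT n k) (MT (CARD('p))) (dT (CARD('p)) k) r s w x \<longrightarrow>
        inf_cocycle (CS (CARD('p)) n k) (MS (CARD('p)) n k) (dS (CARD('p)) n k) r s w
          (red (CARD('p) ^ n) x)"
  proof (intro allI impI)
    fix r s w and x :: "'p mod_ring coch"
    assume ic: "inf_cocycle (CT n k) (MT (CARD('p))) (dT (CARD('p)) k) r s w x"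
    have x: "x \<in> ZZ (CT n k) (MT (CARD('p))) (dT (CARD('p)) k) r s w" using ic unfolding inf_cocycle_def by blast
    have "\<exists>z'\<in>ZZ (CS (CARD('p)) n k) (MS (CARD('p)) n k) (dS (CARD('p)) n k) r' s w.
            red (CARD('p) ^ n) x - z' \<in> BB (CS (CARD('p)) n k) (MS (CARD('p)) n k) (dS (CARD('p)) n k) r s w"
      if r': "r' \<ge> r" for r'
    proof -
      obtain z where z: "z \<in> ZZ (CT n k) (MT (CARD('p))) (dT (CARD('p)) k) r' s w"
        and xz: "x - z \<in> BB (CT n k) (MT (CARD('p))) (dT (CARD('p)) k) r s w"
        using ic r' unfolding inf_cocycle_def by blast
      have "red (CARD('p) ^ n) x - red (CARD('p) ^ n) z = red (CARD('p) ^ n) (x - z)" by (simp add: red_diff)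
      then have "red (CARD('p) ^ n) x - red (CARD('p) ^ n) z \<in> BB (CS (CARD('p)) n k) (MS (CARD('p)) n k) (dS (CARD('p)) n k) r s w"
        using red_BB[OF n xz] by simp
      then show ?thesis using red_ZZ[OF n z] by blast
    qed
    then show "inf_cocycle (CS (CARD('p)) n k) (MS (CARD('p)) n k) (dS (CARD('p)) n k) r s w (red (CARD('p) ^ n) x)"
      unfolding inf_cocycle_def using red_ZZ[OF n x] by blast
  qed
  show ?thesis using A B C D by blast
qed
end
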